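(* Suppose $F$ satisfies Assumption A1, $F\in MDA(\Lambda)$ (i.e. $\xi=0$), Assumption A3, and $x_F<\infty$. Let $Y=1/(x_F-X)$ with distribution function $F_Y$, $\bar F_Y=1-F_Y$, and density $f_Y$. Then there exists $z_Y<\infty$ such that on $(z_Y,\infty)$, $F_Y$ is twice differentiable and $f_Y$ is positive, decreasing and convex. Moreover, $F_Y\in MDA(\Lambda)$ with infinite right endpoint, and $$\lim_{x\to\infty}\frac{\bar F_Y(x)f_Y'(x)}{f_Y(x)^2}=-1.$$
   Context: $X$ is a continuous random variable with distribution function $F$, density $f$, $\bar F=1-F$, and right endpoint $x_F=\sup\{x:F(x)<1\}$. For $\xi\in\mathbb{R}$, $H_\xi(x)=\exp\{-(1+\xi x)^{-1/\xi}\}$ if $\xi\ne0$ and $H_0(x)=\Lambda(x)=\exp\{-e^{-x}\}$, for $1+\xi x>0$. $F\in MDA(H_\xi)$ means there exist $c_n>0$, $d_n\in\mathbb{R}$ with $c_n^{-1}(M_n-d_n)$ converging in distribution to $H_\xi$, $M_n$ the maximum of $n$ i.i.d. copies of $X$. Assumption A1: there exists $z<x_F$ such that on $(z,x_F)$, $F$ is twice differentiable and $f$ is positive, decreasing and convex. Assumption A3: $\lim_{x\uparrow x_F}\bar F(x)f'(x)/f(x)^2=-1$. *)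

theory Defs
  imports "HOL-Probability.Probability"
begin

definition Gumbel :: "real \<Rightarrow> real" where
  "Gumbel x = exp (- exp (- x))"

text \<open>Maximum domain of attraction: F in MDA(H) iff there are c_n > 0 and d_n such that
  (M_n - d_n)/c_n converges in distribution to H. Since the maximum of n iid copies
  of X has distribution function F^n, P((M_n - d_n)/c_n \<le> x) = F(c_n x + d_n)^n, and
  convergence in distribution means convergence at every continuity point of H.\<close>
definition MDA :: "(real \<Rightarrow> real) \<Rightarrow> (real \<Rightarrow> real) \<Rightarrow> bool" where
  "MDA H F \<longleftrightarrow> (\<exists>c d :: nat \<Rightarrow> real. (\<forall>n. c n > 0) \<and>
      (\<forall>x. isCont H x \<longrightarrow> (\<lambda>n. F (c n * x + d n) ^ n) \<longlonglongrightarrow> H x))"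

definition right_endpoint :: "(real \<Rightarrow> real) \<Rightarrow> ereal" where
  "right_endpoint F = Sup (ereal ` {x. F x < 1})"

end

theory Submission imports Defs "HOL-Real_Asymp.Real_Asymp" begin


lemma lip_bound:
  fixes G Gd :: "real \<Rightarrow> real"
  assumes d: "\<And>s. a \<le> s \<Longrightarrow> s \<le> c \<Longrightarrow> (G has_real_derivative Gd s) (at s)"
    and b: "\<And>s. a \<le> s \<Longrightarrow> s \<le> c \<Longrightarrow> \<bar>Gd s\<bar> \<le> e" and ac: "a \<le> c"
  shows "\<bar>G c - G a\<bar> \<le> e * (c - a)"
proof (cases "a = c")
  case True then show ?thesis by simp
next
  case False
  then have "a < c" using ac by simp
  from MVT2[OF this d] obtain \<xi> where xi: "a < \<xi>" "\<xi> < c" "G c - G a = (c - a) * Gd \<xi>" by auto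
  have "\<bar>(c - a) * Gd \<xi>\<bar> = (c - a) * \<bar>Gd \<xi>\<bar>" using ac by (simp add: abs_mult)
  also have "\<dots> \<le> (c - a) * e" using b[of \<xi>] xi ac by (intro mult_left_mono) auto
  finally show ?thesis using xi by (simp add: mult.commute)
qed

lemma lip_bound2:
  fixes G Gd :: "real \<Rightarrow> real"
  assumes d: "\<And>s. min a c \<le> s \<Longrightarrow> s \<le> max a c \<Longrightarrow> (G has_real_derivative Gd s) (at s)"
    and b: "\<And>s. min a c \<le> s \<Longrightarrow> s \<le> max a c \<Longrightarrow> \<bar>Gd s\<bar> \<le> e"
  shows "\<bar>G c - G a\<bar> \<le> e * \<bar>c - a\<bar>"
proof (cases "a \<le> c")
  case True
  then show ?thesis using lip_bound[of a c G Gd e] d b by auto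
next
  case False
  then have "\<bar>G a - G c\<bar> \<le> e * (a - c)" using lip_bound[of c a G Gd e] d b by auto
  then show ?thesis using False by (simp add: abs_minus_commute)
qed

lemma ratio_to_zero:
  fixes Fb f f' :: "real \<Rightarrow> real" and z xF :: real
  assumes zx: "z < xF"
  and dFb: "\<And>x. z < x \<Longrightarrow> x < xF \<Longrightarrow> (Fb has_real_derivative - f x) (at x)"
  and df: "\<And>x. z < x \<Longrightarrow> x < xF \<Longrightarrow> (f has_real_derivative f' x) (at x)"
  and fpos: "\<And>x. z < x \<Longrightarrow> x < xF \<Longrightarrow> f x > 0"
  and Fbpos: "\<And>x. z < x \<Longrightarrow> x < xF \<Longrightarrow> Fb x > 0"
  and lim0: "(Fb \<longlongrightarrow> 0) (at_left xF)"
  and A3: "((\<lambda>x. Fb x * f' x / (f x)^2) \<longlongrightarrow> -1) (at_left xF)"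
  shows "((\<lambda>x. Fb x / ((xF - x) * f x)) \<longlongrightarrow> 0) (at_left xF)"
proof -
  define G where "G x = Fb x / f x" for x
  define Gd where "Gd x = -1 - Fb x * f' x / (f x)^2" for x
  have dG: "(G has_real_derivative Gd x) (at x)" if "z < x" "x < xF" for x
  proof -
    have "((\<lambda>x. Fb x / f x) has_real_derivative (- f x * f x - Fb x * f' x) / (f x * f x)) (at x)"
      by (rule DERIV_divide[OF dFb[OF that] df[OF that]]) (use fpos[OF that] in auto)
    moreover have "(- f x * f x - Fb x * f' x) / (f x * f x) = Gd x"
      using fpos[OF that] by (simp add: Gd_def field_simps power2_eq_square)
    ultimately show ?thesis by (simp add: G_def[abs_def])
  qed
  have Gd0: "(Gd \<longlongrightarrow> 0) (at_left xF)"
    unfolding Gd_def using tendsto_diff[OF tendsto_const[of "-1"] A3] by simp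
  have evb: "\<exists>b. z < b \<and> b < xF \<and> (\<forall>s. b < s \<longrightarrow> s < xF \<longrightarrow> \<bar>Gd s\<bar> \<le> e)" if "e > 0" for e
  proof -
    have "eventually (\<lambda>s. dist (Gd s) 0 < e) (at_left xF)"
      using tendstoD[OF Gd0 that] .
    then obtain b where b: "b < xF" "\<forall>s>b. s < xF \<longrightarrow> \<bar>Gd s\<bar> < e"
      using zx by (auto simp: eventually_at_left)
    show ?thesis
      by (rule exI[of _ "max b ((z+xF)/2)"]) (use b zx in \<open>auto simp: less_max_iff_disj\<close>)
  qed
  have CL: False if x1: "z < x1" "x1 < xF" and c: "c > 0" and Gc: "\<And>x. x1 \<le> x \<Longrightarrow> x < xF \<Longrightarrow> G x \<ge> c" for x1 c
  proof -
    define h where "h x = ln (Fb x) + x / c" for x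
    have hmono: "h x1 \<le> h x" if "x1 \<le> x" "x < xF" for x
    proof (cases "x1 = x")
      case False
      then have lt: "x1 < x" using that by simp
      have der: "(h has_real_derivative (- f s / Fb s + 1/c)) (at s)" if "x1 \<le> s" "s \<le> x" for s
      proof -
        have s: "z < s" "s < xF" using that x1 \<open>x < xF\<close> by auto
        show ?thesis unfolding h_def[abs_def]
          using Fbpos[OF s] c by (auto intro!: derivative_eq_intros dFb[OF s])
      qed
      from MVT2[OF lt der] obtain \<xi> where xi: "x1 < \<xi>" "\<xi> < x" "h x - h x1 = (x - x1) * (- f \<xi> / Fb \<xi> + 1/c)"
        by auto
      have s: "z < \<xi>" "\<xi> < xF" using xi x1 \<open>x < xF\<close> by auto
      have "c \<le> Fb \<xi> / f \<xi>" using Gc[of \<xi>] xi \<open>x < xF\<close> by (simp add: G_def)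
      then have "f \<xi> / Fb \<xi> \<le> 1 / c" using fpos[OF s] Fbpos[OF s] c
        by (simp add: field_simps)
      then have "0 \<le> (x - x1) * (- f \<xi> / Fb \<xi> + 1/c)" using lt by simp
      then show ?thesis using xi by simp
    qed simp
    define K where "K = ln (Fb x1) - (xF - x1) / c"
    have low: "exp K \<le> Fb x" if "x1 \<le> x" "x < xF" for x
    proof -
      have "ln (Fb x1) + x1 / c \<le> ln (Fb x) + x / c" using hmono[OF that] by (simp add: h_def)
      moreover have "(x - x1)/c \<le> (xF - x1)/c" using that c by (intro divide_right_mono) auto
      ultimately have "K \<le> ln (Fb x)" unfolding K_def by (simp add: diff_divide_distrib)
      then have "exp K \<le> exp (ln (Fb x))" by simp
      also have "\<dots> = Fb x" using Fbpos[of x] that x1 by simp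
      finally show ?thesis .
    qed
    have e1: "eventually (\<lambda>x. Fb x < exp K) (at_left xF)"
      using order_tendstoD(2)[OF lim0] by simp
    have e2: "eventually (\<lambda>x. x \<in> {x1<..<xF}) (at_left xF)"
      using eventually_at_left_real[OF x1(2)] .
    have "eventually (\<lambda>x. False) (at_left xF)"
      using e1 e2 by eventually_elim (use low in \<open>fastforce simp: not_le[symmetric]\<close>)
    then show False by simp
  qed
  have G0: "(G \<longlongrightarrow> 0) (at_left xF)"
  proof (rule tendstoI)
    fix \<epsilon> :: real assume ep: "\<epsilon> > 0"
    define e where "e = \<epsilon> / (2*(xF - z))"
    have e: "e > 0" using ep zx by (simp add: e_def)
    obtain b where b: "z<b" "b<xF" "\<forall>s. b<s \<longrightarrow> s<xF \<longrightarrow> \<bar>Gd s\<bar> \<le> e" using evb[OF e] by auto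
    have lt: "G x < \<epsilon>" if x: "b < x" "x < xF" for x
    proof (rule ccontr)
      assume nl: "\<not> G x < \<epsilon>"
      have "G y \<ge> \<epsilon>/2" if y: "x \<le> y" "y < xF" for y
      proof -
        have "\<bar>G y - G x\<bar> \<le> e * (y - x)"
          by (rule lip_bound[OF dG _ y(1)]) (use b x y in auto)
        also have "\<dots> \<le> e * (xF - z)" using e x y b by (intro mult_left_mono) auto
        also have "\<dots> = \<epsilon> / 2" using zx by (simp add: e_def field_simps)
        finally show ?thesis using nl by linarith
      qed
      then show False using CL[of x "\<epsilon>/2"] x b ep by auto
    qed
    have "eventually (\<lambda>x. x \<in> {b<..<xF}) (at_left xF)"
      using eventually_at_left_real[OF b(2)] .
    then show "eventually (\<lambda>x. dist (G x) 0 < \<epsilon>) (at_left xF)"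
    proof eventually_elim
      case (elim x)
      then have "G x > 0" using fpos[of x] Fbpos[of x] b by (auto simp: G_def)
      then show ?case using lt[of x] elim by auto
    qed
  qed
  show ?thesis
  proof (rule tendstoI)
    fix \<epsilon> :: real assume ep: "\<epsilon> > 0"
    obtain b where b: "z<b" "b<xF" "\<forall>s. b<s \<longrightarrow> s<xF \<longrightarrow> \<bar>Gd s\<bar> \<le> \<epsilon>/2"
      using evb[of "\<epsilon>/2"] ep by auto
    have bnd: "\<bar>G x\<bar> \<le> (\<epsilon>/2) * (xF - x)" if x: "b < x" "x < xF" for x
    proof -
      have lim: "((\<lambda>t. (\<epsilon>/2) * (t - x) + \<bar>G t\<bar>) \<longlongrightarrow> (\<epsilon>/2) * (xF - x) + \<bar>0\<bar>) (at_left xF)"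
        by (intro tendsto_intros G0)
      have ev: "eventually (\<lambda>t. \<bar>G x\<bar> \<le> (\<epsilon>/2) * (t - x) + \<bar>G t\<bar>) (at_left xF)"
        using eventually_at_left_real[OF x(2)]
      proof eventually_elim
        case (elim t)
        have "\<bar>G t - G x\<bar> \<le> (\<epsilon>/2) * (t - x)"
          by (rule lip_bound[OF dG]) (use b x elim in auto)
        then show ?case by linarith
      qed
      have "\<bar>G x\<bar> \<le> (\<epsilon>/2) * (xF - x) + \<bar>0\<bar>"
        by (rule tendsto_le[OF trivial_limit_at_left_real lim tendsto_const ev])
      then show ?thesis by simp
    qed
    have "eventually (\<lambda>x. x \<in> {b<..<xF}) (at_left xF)"
      using eventually_at_left_real[OF b(2)] .
    then show "eventually (\<lambda>x. dist (Fb x / ((xF - x) * f x)) 0 < \<epsilon>) (at_left xF)"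
    proof eventually_elim
      case (elim x)
      then have xx: "b < x" "x < xF" by auto
      have "Fb x / ((xF - x) * f x) = G x / (xF - x)" by (simp add: G_def)
      then have "\<bar>Fb x / ((xF - x) * f x)\<bar> = \<bar>G x\<bar> / (xF - x)" using xx by simp
      also have "\<dots> \<le> \<epsilon>/2" using bnd[OF xx] xx by (simp add: divide_le_eq mult.commute)
      finally have "\<bar>Fb x / ((xF - x) * f x)\<bar> \<le> \<epsilon>/2" .
      then show ?case using ep by (simp only: dist_real_def diff_0_right)
    qed
  qed
qed



lemma pow_limit:
  fixes t :: "nat \<Rightarrow> real"
  assumes nn: "eventually (\<lambda>n. 0 \<le> t n) sequentially"
  and lim: "(\<lambda>n. real n * t n) \<longlonglongrightarrow> L"
  shows "(\<lambda>n. (1 - t n)^n) \<longlonglongrightarrow> exp (-L)"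
proof -
  have t0: "t \<longlonglongrightarrow> 0"
  proof -
    have "(\<lambda>n. real n * t n * (1 / real n)) \<longlonglongrightarrow> L * 0"
      by (intro tendsto_mult lim lim_inverse_n')
    moreover have "eventually (\<lambda>n. real n * t n * (1 / real n) = t n) sequentially"
      using eventually_gt_at_top[of "0::nat"] by eventually_elim simp
    ultimately show ?thesis using Lim_transform_eventually by fastforce
  qed
  have lt: "eventually (\<lambda>n. t n < 1/2) sequentially"
    using order_tendstoD(2)[OF t0, of "1/2"] by simp
  have up: "(\<lambda>n. - (real n * t n)) \<longlonglongrightarrow> -L" by (intro tendsto_intros lim)
  have lo: "(\<lambda>n. - (real n * t n) / (1 - t n)) \<longlonglongrightarrow> -L / (1 - 0)"
    by (intro tendsto_intros lim t0) simp
  have ln: "(\<lambda>n. real n * ln (1 - t n)) \<longlonglongrightarrow> -L"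
  proof (rule tendsto_sandwich[OF _ _ _ up])
    show "(\<lambda>n. - (real n * t n) / (1 - t n)) \<longlonglongrightarrow> -L" using lo by simp
    show "eventually (\<lambda>n. - (real n * t n) / (1 - t n) \<le> real n * ln (1 - t n)) sequentially"
      using nn lt
    proof eventually_elim
      case (elim n)
      have "ln (1 / (1 - t n)) \<le> 1 / (1 - t n) - 1" using elim by (intro ln_le_minus_one) auto
      moreover have "ln (1 / (1 - t n)) = - ln (1 - t n)" using elim by (simp add: ln_div)
      moreover have "1 / (1 - t n) - 1 = t n / (1 - t n)" using elim by (simp add: field_simps)
      ultimately have "- (t n / (1 - t n)) \<le> ln (1 - t n)" by linarith
      then have "real n * (- (t n / (1 - t n))) \<le> real n * ln (1 - t n)"
        by (intro mult_left_mono) auto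
      then show ?case by simp
    qed
    show "eventually (\<lambda>n. real n * ln (1 - t n) \<le> - (real n * t n)) sequentially"
      using nn lt
    proof eventually_elim
      case (elim n)
      have "ln (1 - t n) \<le> (1 - t n) - 1" using elim by (intro ln_le_minus_one) auto
      then have "real n * ln (1 - t n) \<le> real n * (- t n)" by (intro mult_left_mono) auto
      then show ?case by simp
    qed
  qed
  have "(\<lambda>n. exp (real n * ln (1 - t n))) \<longlonglongrightarrow> exp (-L)"
    by (intro tendsto_intros ln)
  moreover have "eventually (\<lambda>n. exp (real n * ln (1 - t n)) = (1 - t n)^n) sequentially"
    using lt
  proof eventually_elim
    case (elim n)
    then have "exp (real n * ln (1 - t n)) = exp (ln ((1 - t n)^n))" by (simp add: ln_realpow)
    also have "\<dots> = (1 - t n)^n" using elim by simp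
    finally show ?case .
  qed
  ultimately show ?thesis using Lim_transform_eventually by fastforce
qed

lemma aux_ineq: "(p::real) \<le> (b - B)/2 \<Longrightarrow> q \<le> p + (b - B)/2 \<Longrightarrow> B \<le> b - q" by (simp add: field_simps)

lemma von_mises_key:
  fixes Hb h G G' :: "real \<Rightarrow> real" and z0 x :: real
  assumes dHb: "\<And>y. y > z0 \<Longrightarrow> (Hb has_real_derivative - h y) (at y)"
  and hpos: "\<And>y. y > z0 \<Longrightarrow> h y > 0"
  and Hbpos: "\<And>y. Hb y > 0"
  and Gdef: "\<And>y. G y = Hb y / h y"
  and dG: "\<And>y. y > z0 \<Longrightarrow> (G has_real_derivative G' y) (at y)"
  and G'0: "(G' \<longlongrightarrow> 0) at_top"
  shows "((\<lambda>b. ln (Hb (b + G b * x)) - ln (Hb b)) \<longlongrightarrow> -x) at_top"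
proof (rule tendstoI)
  fix \<epsilon> :: real assume ep: "\<epsilon> > 0"
  define e1 where "e1 = min (1/(2*(\<bar>x\<bar>+1))) (\<epsilon>/(2*(x^2+1)))"
  have xp: "x^2 + 1 > 0" by (simp add: add_nonneg_pos)
  then have e1: "e1 > 0" using ep by (simp add: e1_def)
  have e1x: "\<bar>x\<bar> * e1 \<le> 1/2"
  proof -
    have "\<bar>x\<bar> * e1 \<le> \<bar>x\<bar> * (1/(2*(\<bar>x\<bar>+1)))" by (intro mult_left_mono) (auto simp: e1_def)
    also have "\<dots> \<le> 1/2" by (simp add: field_simps)
    finally show ?thesis .
  qed
  have e1eps: "2 * e1 * x^2 < \<epsilon>"
  proof -
    have "2 * e1 * x^2 \<le> 2 * (\<epsilon>/(2*(x^2+1))) * x^2"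
      by (intro mult_right_mono mult_left_mono) (auto simp: e1_def)
    also have "\<dots> = \<epsilon> * (x^2 / (x^2+1))" using xp by (simp add: field_simps)
    also have "\<dots> < \<epsilon> * 1" using ep xp by (intro mult_strict_left_mono) (auto simp: divide_less_eq)
    finally show ?thesis by simp
  qed
  obtain N where N: "\<forall>s\<ge>N. dist (G' s) 0 < e1"
    using tendstoD[OF G'0 e1] by (auto simp: eventually_at_top_linorder)
  define B where "B = max N (z0 + 1)"
  have B: "B > z0" "\<And>s. s \<ge> B \<Longrightarrow> \<bar>G' s\<bar> \<le> e1"
    using N by (auto simp: B_def less_max_iff_disj)
  have Gpos: "G y > 0" if "y > z0" for y using hpos[OF that] Hbpos[of y] by (simp add: Gdef)
  have Gbound: "G b \<le> G B + e1 * (b - B)" if "b \<ge> B" for b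
  proof -
    have "\<bar>G b - G B\<bar> \<le> e1 * (b - B)"
      by (rule lip_bound[OF dG B(2) that]) (use B in auto)
    then show ?thesis by linarith
  qed
  define B2 where "B2 = B + 2 * (\<bar>x\<bar> * G B) + 1"
  have "eventually (\<lambda>b. b \<ge> B2) at_top" by simp
  then show "eventually (\<lambda>b. dist (ln (Hb (b + G b * x)) - ln (Hb b)) (-x) < \<epsilon>) at_top"
  proof eventually_elim
    case (elim b)
    have GB: "G B > 0" using Gpos B by simp
    have "0 \<le> 2 * (\<bar>x\<bar> * G B)" using GB by simp
    then have bB: "b \<ge> B" using elim unfolding B2_def by linarith
    have Gb: "G b > 0" using Gpos bB B by simp
    have "\<bar>x\<bar> * G b \<le> \<bar>x\<bar> * (G B + e1 * (b - B))"
      by (intro mult_left_mono Gbound bB) auto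
    also have "\<dots> = \<bar>x\<bar> * G B + (\<bar>x\<bar> * e1) * (b - B)" by (simp add: algebra_simps)
    also have "\<dots> \<le> \<bar>x\<bar> * G B + (1/2) * (b - B)"
      using e1x bB by (intro add_left_mono mult_right_mono) auto
    finally have xG: "\<bar>x\<bar> * G b \<le> \<bar>x\<bar> * G B + (b - B) / 2" by simp
    have Ilow: "b - \<bar>x\<bar> * G b \<ge> B"
    proof -
      have "(b - B) / 2 \<ge> \<bar>x\<bar> * G B" using elim unfolding B2_def by simp
      then show ?thesis by (rule aux_ineq[OF _ xG])
    qed
    define c where "c = b + G b * x"
    have cI: "\<bar>c - b\<bar> = \<bar>x\<bar> * G b" using Gb by (simp add: c_def abs_mult)
    have inI: "s \<ge> B" "\<bar>s - b\<bar> \<le> \<bar>x\<bar> * G b" if "min b c \<le> s" "s \<le> max b c" for s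
      using that cI Ilow by (auto simp: min_def max_def split: if_splits)
    have Gs: "\<bar>G s - G b\<bar> \<le> e1 * (\<bar>x\<bar> * G b)" "G s \<ge> G b / 2" if "min b c \<le> s" "s \<le> max b c" for s
    proof -
      have "\<bar>G s - G b\<bar> \<le> e1 * \<bar>s - b\<bar>"
        by (rule lip_bound2[OF dG B(2)]) (use inI[OF that] bB B in \<open>auto simp: min_def max_def split: if_splits\<close>)
      also have "\<dots> \<le> e1 * (\<bar>x\<bar> * G b)" using inI[OF that] e1 by (intro mult_left_mono) auto
      finally show 1: "\<bar>G s - G b\<bar> \<le> e1 * (\<bar>x\<bar> * G b)" .
      have "e1 * (\<bar>x\<bar> * G b) = (\<bar>x\<bar> * e1) * G b" by simp
      also have "\<dots> \<le> (1/2) * G b" using e1x Gb by (intro mult_right_mono) auto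
      finally show "G s \<ge> G b / 2" using 1 by linarith
    qed
    define w where "w s = ln (Hb s) + (s - b) / G b" for s
    define w' where "w' s = (G s - G b) / (G s * G b)" for s
    have dw: "(w has_real_derivative w' s) (at s)" if "min b c \<le> s" "s \<le> max b c" for s
    proof -
      have s: "s > z0" using inI[OF that] B by simp
      have "(w has_real_derivative (- h s / Hb s + 1 / G b)) (at s)"
        unfolding w_def[abs_def] using Hbpos[of s] Gb
        by (auto intro!: derivative_eq_intros dHb[OF s])
      moreover have "w' s = 1 / G b - 1 / G s"
        using Gpos[OF s] Gb by (simp add: w'_def field_simps)
      moreover have "1 / G s = h s / Hb s" by (simp add: Gdef)
      ultimately show ?thesis by simp
    qed
    have bw: "\<bar>w' s\<bar> \<le> 2 * e1 * \<bar>x\<bar> / G b" if "min b c \<le> s" "s \<le> max b c" for s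
    proof -
      have Gs2: "G s \<ge> G b / 2" using Gs(2)[OF that] .
      have "\<bar>w' s\<bar> = \<bar>G s - G b\<bar> / (G s * G b)" using Gs2 Gb by (simp add: w'_def abs_mult)
      also have "\<dots> \<le> (e1 * (\<bar>x\<bar> * G b)) / (G b / 2 * G b)"
        using Gs(1)[OF that] Gs2 Gb by (intro frac_le mult_right_mono) auto
      also have "\<dots> = 2 * e1 * \<bar>x\<bar> / G b" using Gb by (simp add: field_simps)
      finally show ?thesis .
    qed
    have "\<bar>w c - w b\<bar> \<le> 2 * e1 * \<bar>x\<bar> / G b * \<bar>c - b\<bar>"
      by (rule lip_bound2[OF dw bw]) (auto simp: min_def max_def)
    also have "\<dots> = 2 * e1 * x^2" using Gb cI by (simp add: power2_eq_square abs_mult_self_eq field_simps)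
    finally have "\<bar>w c - w b\<bar> < \<epsilon>" using e1eps by simp
    moreover have "w c - w b = ln (Hb (b + G b * x)) - ln (Hb b) - (-x)"
      using Gb by (simp add: w_def c_def)
    ultimately show ?case by (simp add: dist_real_def)
  qed
qed

lemma von_mises:
  fixes H h G' :: "real \<Rightarrow> real" and z0 :: real
  assumes mono: "mono H"
  and Hnn: "\<And>y. H y \<ge> 0"
  and d: "\<And>y. y > z0 \<Longrightarrow> (H has_real_derivative h y) (at y)"
  and hpos: "\<And>y. y > z0 \<Longrightarrow> h y > 0"
  and Hlt: "\<And>y. H y < 1"
  and lim1: "(H \<longlongrightarrow> 1) at_top"
  and dG: "\<And>y. y > z0 \<Longrightarrow> ((\<lambda>y. (1 - H y) / h y) has_real_derivative G' y) (at y)"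
  and G'0: "(G' \<longlongrightarrow> 0) at_top"
  shows "MDA Gumbel H"
proof -
  define Hb where "Hb y = 1 - H y" for y
  define G where "G y = Hb y / h y" for y
  have Hbpos: "Hb y > 0" for y using Hlt[of y] by (simp add: Hb_def)
  have dHb: "(Hb has_real_derivative - h y) (at y)" if "y > z0" for y
    unfolding Hb_def[abs_def] by (auto intro!: derivative_eq_intros d[OF that])
  have dG': "(G has_real_derivative G' y) (at y)" if "y > z0" for y
    using dG[OF that] by (simp add: G_def[abs_def] Hb_def[abs_def])
  have Gpos: "G y > 0" if "y > z0" for y using hpos[OF that] Hbpos[of y] by (simp add: G_def)
  have key: "((\<lambda>b. Hb (b + G b * x) / Hb b) \<longlongrightarrow> exp (-x)) at_top" for x
  proof -
    have "((\<lambda>b. exp (ln (Hb (b + G b * x)) - ln (Hb b))) \<longlongrightarrow> exp (-x)) at_top"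
      by (intro tendsto_intros von_mises_key[OF dHb hpos Hbpos G_def dG' G'0])
    moreover have "exp (ln (Hb (b + G b * x)) - ln (Hb b)) = Hb (b + G b * x) / Hb b" for b
      using Hbpos by (simp add: exp_diff)
    ultimately show ?thesis by simp
  qed
  have Hb0: "(Hb \<longlongrightarrow> 0) at_top"
    unfolding Hb_def[abs_def] using tendsto_diff[OF tendsto_const[of 1] lim1] by simp
  obtain n0 where n0: "inverse (real (Suc n0)) < Hb (z0+1)"
    using reals_Archimedean[OF Hbpos[of "z0+1"]] by auto
  define N where "N = Suc n0"
  have N: "N \<ge> 1" "1 / real N < Hb (z0+1)" using n0 by (auto simp: N_def inverse_eq_divide)
  have exb: "\<exists>b. b \<ge> z0+1 \<and> Hb b = 1 / real n" if "n \<ge> N" for n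
  proof -
    have npos: "real n > 0" using that N by simp
    have le: "1 / real n \<le> 1 / real N" using that N by (simp add: frac_le)
    have "eventually (\<lambda>y. Hb y < 1 / real n) at_top"
      using order_tendstoD(2)[OF Hb0] npos by simp
    then obtain T0 where T0: "\<forall>y\<ge>T0. Hb y < 1 / real n" by (auto simp: eventually_at_top_linorder)
    define T where "T = max T0 (z0+1)"
    have "\<exists>b. z0+1 \<le> b \<and> b \<le> T \<and> Hb b = 1 / real n"
    proof (rule IVT2)
      show "Hb T \<le> 1 / real n" using T0 by (auto simp: T_def less_imp_le)
      show "1 / real n \<le> Hb (z0+1)" using le N by simp
      show "z0 + 1 \<le> T" by (simp add: T_def)
      show "\<forall>x. z0 + 1 \<le> x \<and> x \<le> T \<longrightarrow> isCont Hb x"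
        using dHb DERIV_isCont by force
    qed
    then show ?thesis by auto
  qed
  define bs where "bs n = (if n \<ge> N then SOME b. b \<ge> z0+1 \<and> Hb b = 1 / real n else z0+1)" for n
  have bs: "bs n \<ge> z0+1" for n
    using someI_ex[OF exb[of n]] by (auto simp: bs_def)
  have bs_eq: "Hb (bs n) = 1 / real n" if "n \<ge> N" for n
    using someI_ex[OF exb[OF that]] that by (auto simp: bs_def)
  have bs_top: "filterlim bs at_top sequentially"
  proof (subst filterlim_at_top_gt[where c="z0+1"], intro allI impI)
    fix Z :: real assume Z: "Z > z0+1"
    have "eventually (\<lambda>n. 1 / real n < Hb Z) sequentially"
      using order_tendstoD(2)[OF lim_inverse_n' Hbpos[of Z]] by simp
    moreover have "eventually (\<lambda>n. n \<ge> N) sequentially" by simp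
    ultimately show "eventually (\<lambda>n. Z \<le> bs n) sequentially"
    proof eventually_elim
      case (elim n)
      then have "Hb (bs n) < Hb Z" using bs_eq by simp
      then have "H Z < H (bs n)" by (simp add: Hb_def)
      show ?case
      proof (rule ccontr)
        assume "\<not> Z \<le> bs n"
        then have "H (bs n) \<le> H Z" using monoD[OF mono, of "bs n" Z] by simp
        then show False using \<open>H Z < H (bs n)\<close> by simp
      qed
    qed
  qed
  define c where "c n = G (bs n)" for n
  have cpos: "c n > 0" for n using Gpos bs[of n] by (simp add: c_def)
  show ?thesis unfolding MDA_def
  proof (intro exI conjI allI impI)
    show "0 < c n" for n by (rule cpos)
    fix x :: real
    define t where "t n = Hb (bs n + c n * x)" for n
    have "(\<lambda>n. Hb (bs n + G (bs n) * x) / Hb (bs n)) \<longlonglongrightarrow> exp (-x)"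
      using filterlim_compose[OF key bs_top] by simp
    moreover have "eventually (\<lambda>n. Hb (bs n + G (bs n) * x) / Hb (bs n) = real n * t n) sequentially"
      using eventually_ge_at_top[of N]
    proof eventually_elim
      case (elim n)
      then show ?case using bs_eq[OF elim] N by (simp add: t_def c_def)
    qed
    ultimately have nt: "(\<lambda>n. real n * t n) \<longlonglongrightarrow> exp (-x)"
      using Lim_transform_eventually by fastforce
    have "(\<lambda>n. (1 - t n)^n) \<longlonglongrightarrow> exp (- exp (-x))"
      by (rule pow_limit[OF _ nt]) (use Hbpos in \<open>auto simp: t_def less_imp_le\<close>)
    moreover have "(1 - t n) = H (c n * x + bs n)" for n by (simp add: t_def Hb_def add.commute)
    ultimately show "(\<lambda>n. H (c n * x + bs n) ^ n) \<longlonglongrightarrow> Gumbel x"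
      by (simp add: Gumbel_def)
  qed
qed




lemma convex_on_eq_on:
  assumes "convex_on S f" "\<And>x. x \<in> S \<Longrightarrow> f x = g x"
  shows "convex_on S g"
proof -
  have cS: "convex S" using assms(1) convex_on_imp_convex by auto
  show ?thesis
  proof (rule convex_onI[OF _ cS])
    fix t :: real and x y assume t: "0 < t" "t < 1" and xy: "x \<in> S" "y \<in> S"
    have "(1 - t) *\<^sub>R x + t *\<^sub>R y \<in> S" using cS xy t by (simp add: convex_def)
    then show "g ((1 - t) *\<^sub>R x + t *\<^sub>R y) \<le> (1 - t) * g x + t * g y"
      using convex_onD[OF assms(1), of t x y] t xy assms(2) by auto
  qed
qed

lemma convex_on_mul_anti:
  fixes S::"real set"
  assumes "convex_on S f" "convex_on S g"
  assumes "antimono_on S f" "antimono_on S g"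
  assumes fty: "f \<in> S \<rightarrow> {0..}" and gty: "g \<in> S \<rightarrow> {0..}"
  shows "convex_on S (\<lambda>x. f x*g x)"
proof (intro convex_on_linorderI)
  show "convex S"
    using assms convex_on_imp_convex by auto
  fix t::real and x y
  assume t: "0 < t" "t < 1" and xy: "x \<in> S" "y \<in> S" "x<y"
  have "f y \<le> f x" "g y \<le> g x" using assms(3,4) xy unfolding monotone_on_def by auto
  then have "0 \<le> (f x - f y) * (g x - g y)" by simp
  then have "f x * g y + f y * g x \<le> f x * g x + f y * g y" by (simp add: algebra_simps)
  then have *: "t*(1-t) * f x * g y + t*(1-t) * f y * g x \<le> t*(1-t) * f x * g x + t*(1-t) * f y * g y"
    using t mult_left_mono[of "f x * g y + f y * g x" "f x * g x + f y * g y" "t*(1-t)"]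
    by (simp add: algebra_simps)
  have inS: "(1-t)*x + t*y \<in> S"
    using t xy \<open>convex S\<close> by (simp add: convex_alt)
  then have "f ((1-t)*x + t*y) * g ((1-t)*x + t*y) \<le> ((1-t) * f x + t * f y)*g ((1-t)*x + t*y)"
    using convex_onD [OF \<open>convex_on S f\<close>, of t x y] t xy fty gty
    by (intro mult_mono add_nonneg_nonneg) (auto simp: Pi_iff zero_le_mult_iff)
  also have "\<dots> \<le> ((1-t) * f x + t * f y) * ((1-t)*g x + t*g y)"
    using convex_onD [OF \<open>convex_on S g\<close>, of t x y] t xy fty gty inS
    by (intro mult_mono add_nonneg_nonneg) (auto simp: Pi_iff zero_le_mult_iff)
  also have "\<dots> \<le> (1-t) * (f x*g x) + t * (f y*g y)"
    using * by (simp add: algebra_simps)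
  finally show "f ((1-t) *\<^sub>R x + t *\<^sub>R y) * g ((1-t) *\<^sub>R x + t *\<^sub>R y) \<le> (1-t)*(f x*g x) + t*(f y*g y)"
    by simp
qed

lemma convex_on_compose_anti:
  fixes S T :: "real set" and f g :: "real \<Rightarrow> real"
  assumes cf: "convex_on T f" and af: "antimono_on T f" and cS: "convex S"
    and gST: "\<And>x. x \<in> S \<Longrightarrow> g x \<in> T"
    and gconc: "\<And>t x y. 0 < t \<Longrightarrow> t < 1 \<Longrightarrow> x \<in> S \<Longrightarrow> y \<in> S \<Longrightarrow>
                 (1-t) * g x + t * g y \<le> g ((1-t) * x + t * y)"
  shows "convex_on S (\<lambda>x. f (g x))"
proof (rule convex_onI[OF _ cS])
  fix t :: real and x y assume t: "0 < t" "t < 1" and xy: "x \<in> S" "y \<in> S"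
  have cT: "convex T" using cf convex_on_imp_convex by auto
  have inS: "(1-t)*x + t*y \<in> S" using t xy cS by (simp add: convex_alt)
  have inT: "(1-t) * g x + t * g y \<in> T" using t gST[OF xy(1)] gST[OF xy(2)] cT by (simp add: convex_alt)
  have "f (g ((1-t)*x + t*y)) \<le> f ((1-t) * g x + t * g y)"
    using af gconc[OF t xy] inT gST[OF inS] unfolding monotone_on_def by auto
  also have "\<dots> \<le> (1-t) * f (g x) + t * f (g y)"
    using convex_onD[OF cf, of t "g x" "g y"] t gST xy by auto
  finally show "f (g ((1 - t) *\<^sub>R x + t *\<^sub>R y)) \<le> (1 - t) * f (g x) + t * f (g y)" by simp
qed




lemma lt_ex_plus1: "(x::real) < x + 1" by simp

lemma Y_le_iff:
  fixes xF v y :: real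
  assumes "y > 0"
  shows "(1/(xF - v) \<le> y) \<longleftrightarrow> (v \<le> xF - 1/y \<or> xF \<le> v)"
proof (cases "v < xF")
  case True
  then have d: "xF - v > 0" by simp
  have "(1/(xF - v) \<le> y) \<longleftrightarrow> 1 \<le> y * (xF - v)" using d by (simp add: divide_le_eq mult.commute)
  also have "\<dots> \<longleftrightarrow> 1/y \<le> xF - v" using assms by (simp add: divide_le_eq mult.commute)
  finally show ?thesis using True by auto
next
  case False
  then have "1/(xF - v) \<le> 0" by (simp add: divide_nonpos_pos)
  then have "1/(xF - v) \<le> y" using assms by linarith
  then show ?thesis using False by auto
qed

lemma Y_le_npos:
  fixes xF v y :: real
  assumes "y \<le> 0" "1/(xF - v) \<le> y"
  shows "xF \<le> v"
proof (rule ccontr)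
  assume "\<not> xF \<le> v"
  then have "1/(xF - v) > 0" by simp
  then show False using assms by linarith
qed

lemma alg_A3: "(y::real)>0 \<Longrightarrow> a>0 \<Longrightarrow> (1-c)*d/a\<^sup>2 - 2*((1-c)/((xF - (xF - 1/y))*a)) = (1-c)*(d/y^4 - 2*a/y^3)/(a/y^2)\<^sup>2"
  by (simp add: field_simps power2_eq_square power3_eq_cube power4_eq_xxxx)

lemma subst_piece:
  fixes f :: "real \<Rightarrow> real" and A :: "real set" and a b xF :: real
  assumes fm[measurable]: "f \<in> borel_measurable borel" and A[measurable]: "A \<in> sets borel"
    and fnn: "\<And>x. f x \<ge> 0" and ab: "0 < a" "a < b"
  shows "(\<integral>\<^sup>+x. ennreal (f x) * indicator A (1/(xF - x)) * indicator {xF - 1/a .. xF - 1/b} x \<partial>lborel)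
       = (\<integral>\<^sup>+y. ennreal (f (xF - 1/y) / y^2) * indicator A y * indicator {a..b} y \<partial>lborel)"
proof -
  have "(\<integral>\<^sup>+x. (\<lambda>x. ennreal (f x) * indicator A (1/(xF - x))) x * indicator {(\<lambda>y. xF - 1/y) a .. (\<lambda>y. xF - 1/y) b} x \<partial>lborel)
      = (\<integral>\<^sup>+y. (\<lambda>x. ennreal (f x) * indicator A (1/(xF - x))) ((\<lambda>y. xF - 1/y) y) * (\<lambda>y. 1/y^2) y * indicator {a..b} y \<partial>lborel)"
  proof (rule nn_integral_substitution_aux)
    show "(\<lambda>x. ennreal (f x) * indicator A (1/(xF - x))) \<in> borel_measurable borel" by measurable
    show "\<And>x. 0 \<le> ennreal (f x) * indicator A (1/(xF - x))" by simp
    show "((\<lambda>y. xF - 1/y) has_real_derivative 1/x^2) (at x)" if "x \<in> {a..b}" for x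
      using that ab by (auto intro!: derivative_eq_intros simp: power2_eq_square)
    show "continuous_on {a..b} (\<lambda>y. 1/y^2)" using ab by (auto intro!: continuous_intros)
    show "\<And>x. x \<in> {a..b} \<Longrightarrow> 0 \<le> 1/x^2" by simp
  qed (rule ab(2))
  also have "\<dots> = (\<integral>\<^sup>+y. ennreal (f (xF - 1/y) / y^2) * indicator A y * indicator {a..b} y \<partial>lborel)"
  proof (rule nn_integral_cong)
    fix y :: real
    show "ennreal (f (xF - 1/y)) * indicator A (1/(xF - (xF - 1/y))) * ennreal (1/y^2) * indicator {a..b} y
        = ennreal (f (xF - 1/y) / y^2) * indicator A y * indicator {a..b} y"
    proof (cases "y \<in> {a..b}")
      case True
      then have y0: "y > 0" using ab by auto
      have "ennreal (f (xF - 1/y) / y^2) = ennreal (f (xF - 1/y)) * ennreal (1/y^2)"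
        using fnn by (simp add: ennreal_mult[symmetric] divide_inverse)
      then show ?thesis using y0 by (simp add: mult_ac)
    qed simp
  qed
  finally show ?thesis by simp
qed

theorem proposition3:
  fixes M :: "'a measure" and X :: "'a \<Rightarrow> real" and f :: "real \<Rightarrow> real" and xF :: real
  assumes prob: "prob_space M"
    and dens: "distributed M lborel X (\<lambda>x. ennreal (f x))"
    and fnonneg: "\<And>x. f x \<ge> 0"
    and xF: "right_endpoint (cdf (distr M borel X)) = ereal xF"
    and A1: "\<exists>z < xF. (\<forall>x\<in>{z<..<xF}.
                 (cdf (distr M borel X) has_real_derivative f x) (at x) \<and>
                 f differentiable (at x) \<and> f x > 0) \<and>
               antimono_on {z<..<xF} f \<and> convex_on {z<..<xF} f"
    and MDA: "MDA Gumbel (cdf (distr M borel X))"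
    and A3: "((\<lambda>x. (1 - cdf (distr M borel X) x) * deriv f x / (f x)\<^sup>2) \<longlongrightarrow> -1) (at_left xF)"
  shows "\<exists>fY :: real \<Rightarrow> real. \<exists>zY :: real.
           distributed M lborel (\<lambda>\<omega>. 1 / (xF - X \<omega>)) (\<lambda>y. ennreal (fY y)) \<and>
           (\<forall>y. fY y \<ge> 0) \<and>
           (\<forall>y\<in>{zY<..}. (cdf (distr M borel (\<lambda>\<omega>. 1 / (xF - X \<omega>))) has_real_derivative fY y) (at y) \<and>
                 fY differentiable (at y) \<and> fY y > 0) \<and>
           antimono_on {zY<..} fY \<and> convex_on {zY<..} fY \<and>
           MDA Gumbel (cdf (distr M borel (\<lambda>\<omega>. 1 / (xF - X \<omega>)))) \<and>
           right_endpoint (cdf (distr M borel (\<lambda>\<omega>. 1 / (xF - X \<omega>)))) = \<infinity> \<and>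
           ((\<lambda>y. (1 - cdf (distr M borel (\<lambda>\<omega>. 1 / (xF - X \<omega>))) y) * deriv fY y / (fY y)\<^sup>2)
              \<longlongrightarrow> -1) at_top"
proof -
  interpret prob_space M by (rule prob)
  define D where "D = distr M borel X"
  define F where "F = cdf D"
  have Xm[measurable]: "X \<in> borel_measurable M" using distributed_measurable[OF dens] by simp
  have fm[measurable]: "f \<in> borel_measurable borel"
    using distributed_real_measurable[OF _ dens] fnonneg by simp
  interpret D: real_distribution D unfolding D_def by (rule real_distribution_distr) simp
  have Ddens: "D = density lborel (\<lambda>x. ennreal (f x))"
  proof -
    have "D = distr M lborel X" unfolding D_def by (rule distr_cong) auto
    then show ?thesis using distributed_distr_eq_density[OF dens] by simp
  qed
  have Fle1: "F x \<le> 1" for x unfolding F_def by (rule D.cdf_bounded_prob)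
  have F_lt: "F x < 1" if "x < xF" for x
  proof -
    have "ereal x < Sup (ereal ` {x. F x < 1})" using xF that by (simp add: right_endpoint_def F_def D_def)
    then obtain u where u: "F u < 1" "x < u" by (auto simp: less_Sup_iff)
    then show ?thesis using D.cdf_nondecreasing[of x u] by (simp add: F_def)
  qed
  have F_eq1: "F x = 1" if "x > xF" for x
  proof (rule ccontr)
    assume "F x \<noteq> 1"
    then have "F x < 1" using Fle1[of x] by simp
    then have "ereal x \<le> Sup (ereal ` {x. F x < 1})" by (auto intro: Sup_upper)
    then show False using xF that by (simp add: right_endpoint_def F_def D_def)
  qed
  have atom0: "measure D {x} = 0" for x
  proof -
    have "emeasure D {x} = 0" unfolding Ddens
      by (subst emeasure_density) (auto intro: nn_integral_null_set)
    then show ?thesis by (simp add: measure_def)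
  qed
  have Fcont: "isCont F x" for x unfolding F_def using D.isCont_cdf atom0 by simp
  have FxF: "F xF = 1"
  proof -
    have "(F \<longlongrightarrow> F xF) (at_right xF)" using Fcont[of xF] by (simp add: isCont_def filterlim_at_split)
    moreover have "eventually (\<lambda>x. F x = 1) (at_right xF)"
      using eventually_at_right_real[of xF "xF+1", OF lt_ex_plus1] by eventually_elim (auto intro: F_eq1)
    ultimately have "((\<lambda>_. 1) \<longlongrightarrow> F xF) (at_right xF)" using Lim_transform_eventually by fastforce
    then show ?thesis using tendsto_unique[OF trivial_limit_at_right_real _ tendsto_const] by metis
  qed
  have lessxF: "measure D {..<xF} = 1"
  proof -
    have "(F \<longlongrightarrow> measure D {..<xF}) (at_left xF)" unfolding F_def by (rule D.cdf_at_left)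
    moreover have "(F \<longlongrightarrow> F xF) (at_left xF)" using Fcont[of xF] by (simp add: isCont_def filterlim_at_split)
    ultimately show ?thesis using tendsto_unique[OF trivial_limit_at_left_real] FxF by metis
  qed
  have gexF: "measure D {xF..} = 0"
  proof -
    have "measure D {xF..} = measure D (space D - {..<xF})" by (simp add: Compl_eq_Diff_UNIV[symmetric] not_less atLeast_def)
    also have "\<dots> = 1 - measure D {..<xF}" by (rule D.prob_compl) simp
    finally show ?thesis using lessxF by simp
  qed
  obtain z where z: "z < xF" and zd: "\<And>x. x\<in>{z<..<xF} \<Longrightarrow> (F has_real_derivative f x) (at x) \<and>
                 f differentiable (at x) \<and> f x > 0"
      and fanti: "antimono_on {z<..<xF} f" and fconv: "convex_on {z<..<xF} f"
    using A1 unfolding F_def D_def by auto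
  define Y where "Y \<omega> = 1 / (xF - X \<omega>)" for \<omega>
  have Ym[measurable]: "Y \<in> borel_measurable M" unfolding Y_def by measurable
  define DY where "DY = distr M borel Y"
  define FY where "FY = cdf DY"
  interpret DY: real_distribution DY unfolding DY_def by (rule real_distribution_distr) simp
  have measD: "measure D S = measure M (X -` S \<inter> space M)" if "S \<in> sets borel" for S
    unfolding D_def using that by (simp add: measure_distr)
  have FY_pos: "FY y = F (xF - 1/y)" if y: "y > 0" for y
  proof -
    have "FY y = measure M (Y -` {..y} \<inter> space M)" unfolding FY_def DY_def cdf_def
      by (simp add: measure_distr)
    also have "Y -` {..y} \<inter> space M = X -` ({..xF - 1/y} \<union> {xF..}) \<inter> space M"
      using Y_le_iff[OF y] by (auto simp: Y_def)
    also have "measure M \<dots> = measure D ({..xF - 1/y} \<union> {xF..})" by (rule measD[symmetric]) simp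
    also have "\<dots> = measure D {..xF - 1/y} + measure D {xF..}"
      using y by (intro D.finite_measure_Union) (auto, smt (verit) divide_pos_pos)
    finally show ?thesis using gexF by (simp add: F_def cdf_def)
  qed
  have FY_npos: "FY y = 0" if y: "y \<le> 0" for y
  proof -
    have "FY y = measure M (Y -` {..y} \<inter> space M)" unfolding FY_def DY_def cdf_def
      by (simp add: measure_distr)
    also have "\<dots> \<le> measure M (X -` {xF..} \<inter> space M)"
      using Y_le_npos[OF y] by (intro finite_measure_mono) (auto simp: Y_def)
    also have "\<dots> = 0" using gexF measD[of "{xF..}"] by simp
    finally show ?thesis using DY.cdf_nonneg[of y] by (simp add: FY_def)
  qed
  define fY where "fY y = (if y > 0 then f (xF - 1/y) / y^2 else 0)" for y
  define zY where "zY = 1 / (xF - z)"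
  define fY' where "fY' y = deriv f (xF - 1/y) / y^4 - 2 * f (xF - 1/y) / y^3" for y
  have zYpos: "zY > 0" using z by (simp add: zY_def)
  have gin: "xF - 1/y \<in> {z<..<xF}" if "y > zY" for y
  proof -
    have y0: "y > 0" using that zYpos by simp
    have "1/y < 1/zY" using that zYpos by (simp add: frac_less2)
    then have "1/y < xF - z" by (simp add: zY_def)
    then show ?thesis using y0 by simp
  qed
  have fYnn: "fY y \<ge> 0" for y using fnonneg by (simp add: fY_def)
  have dF: "(F has_real_derivative f x) (at x)" if "x \<in> {z<..<xF}" for x using zd[OF that] by simp
  have df: "(f has_real_derivative deriv f x) (at x)" if "x \<in> {z<..<xF}" for x
    using zd[OF that] DERIV_deriv_iff_real_differentiable by blast
  have fpos: "f x > 0" if "x \<in> {z<..<xF}" for x using zd[OF that] by simp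
  have dg: "((\<lambda>y. xF - 1/y) has_real_derivative 1/y^2) (at y)" if "y > 0" for y
    using that by (auto intro!: derivative_eq_intros simp: power2_eq_square)
  have fY_pos: "fY y = f (xF - 1/y) / y^2" if "y > 0" for y using that by (simp add: fY_def)
  have dFY: "(FY has_real_derivative fY y) (at y)" if y: "y > zY" for y
  proof -
    have y0: "y > 0" using y zYpos by simp
    have "((\<lambda>y. F (xF - 1/y)) has_real_derivative f (xF - 1/y) * (1/y^2)) (at y)"
      by (rule DERIV_chain2[OF dF[OF gin[OF y]] dg[OF y0]])
    then have "((\<lambda>y. F (xF - 1/y)) has_real_derivative fY y) (at y)" using y0 by (simp add: fY_def)
    then show ?thesis
      by (rule has_field_derivative_transform_within_open[where S="{0<..}"]) (use y0 FY_pos in auto)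
  qed
  have dfY: "(fY has_real_derivative fY' y) (at y)" if y: "y > zY" for y
  proof -
    have y0: "y > 0" using y zYpos by simp
    have "((\<lambda>y. f (xF - 1/y)) has_real_derivative deriv f (xF - 1/y) * (1/y^2)) (at y)"
      by (rule DERIV_chain2[OF df[OF gin[OF y]] dg[OF y0]])
    from DERIV_divide[OF this DERIV_power[OF DERIV_ident, of 2 y]]
    have "((\<lambda>y. f (xF - 1/y) / y^2) has_real_derivative
       (deriv f (xF - 1/y) * (1/y^2) * y^2 - f (xF - 1/y) * (real 2 * y ^ (2 - 1) * 1)) / (y^2 * y^2)) (at y)"
      using y0 by simp
    moreover have "(deriv f (xF - 1/y) * (1/y^2) * y^2 - f (xF - 1/y) * (real 2 * y ^ (2 - 1) * 1)) / (y^2 * y^2) = fY' y"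
      using y0 by (simp add: fY'_def field_simps power2_eq_square power3_eq_cube power4_eq_xxxx)
    ultimately have "((\<lambda>y. f (xF - 1/y) / y^2) has_real_derivative fY' y) (at y)" by simp
    then show ?thesis
      by (rule has_field_derivative_transform_within_open[where S="{0<..}"]) (use y0 fY_pos in auto)
  qed
  have fYpos: "fY y > 0" if "y > zY" for y
    using fpos[OF gin[OF that]] that zYpos by (simp add: fY_def)
  have FY_lt: "FY y < 1" for y
  proof (cases "y > 0")
    case True
    then show ?thesis using FY_pos[OF True] F_lt[of "xF - 1/y"] by simp
  next
    case False
    then show ?thesis using FY_npos[of y] by simp
  qed
  have Fcont': "(F \<longlongrightarrow> 1) (at_left xF)" using Fcont[of xF] FxF by (simp add: isCont_def filterlim_at_split)
  have Q1: "((\<lambda>x. (1 - F x) * deriv f x / (f x)\<^sup>2) \<longlongrightarrow> -1) (at_left xF)"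
    using A3 by (simp add: F_def D_def)
  have Q2: "((\<lambda>x. (1 - F x) / ((xF - x) * f x)) \<longlongrightarrow> 0) (at_left xF)"
  proof (rule ratio_to_zero[OF z])
    show "((\<lambda>x. 1 - F x) has_real_derivative - f x) (at x)" if "z < x" "x < xF" for x
      using that by (auto intro!: derivative_eq_intros dF)
    show "(f has_real_derivative deriv f x) (at x)" if "z < x" "x < xF" for x using that df by auto
    show "f x > 0" if "z < x" "x < xF" for x using that fpos by auto
    show "1 - F x > 0" if "z < x" "x < xF" for x using that F_lt by auto
    show "((\<lambda>x. 1 - F x) \<longlongrightarrow> 0) (at_left xF)" using tendsto_diff[OF tendsto_const[of 1] Fcont'] by simp
  qed (rule Q1)
  have limg: "filterlim (\<lambda>y. xF - 1/y) (at_left xF) at_top"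
    unfolding filterlim_at
  proof
    show "((\<lambda>y. xF - 1/y) \<longlongrightarrow> xF) at_top" by real_asymp
    show "eventually (\<lambda>y. xF - 1/y \<in> {..<xF} \<and> xF - 1/y \<noteq> xF) at_top"
      using eventually_gt_at_top[of 0] by eventually_elim auto
  qed
  have A3Y: "((\<lambda>y. (1 - FY y) * deriv fY y / (fY y)\<^sup>2) \<longlongrightarrow> -1) at_top"
  proof -
    have "((\<lambda>x. (1 - F x) * deriv f x / (f x)\<^sup>2 - 2 * ((1 - F x) / ((xF - x) * f x))) \<longlongrightarrow> -1 - 2 * 0) (at_left xF)"
      by (intro tendsto_intros Q1 Q2)
    from filterlim_compose[OF this limg]
    have lim: "((\<lambda>y. (1 - F (xF - 1/y)) * deriv f (xF - 1/y) / (f (xF - 1/y))\<^sup>2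
              - 2 * ((1 - F (xF - 1/y)) / ((xF - (xF - 1/y)) * f (xF - 1/y)))) \<longlongrightarrow> -1) at_top"
      by simp
    have "eventually (\<lambda>y. (1 - F (xF - 1/y)) * deriv f (xF - 1/y) / (f (xF - 1/y))\<^sup>2
              - 2 * ((1 - F (xF - 1/y)) / ((xF - (xF - 1/y)) * f (xF - 1/y)))
          = (1 - FY y) * deriv fY y / (fY y)\<^sup>2) at_top"
      using eventually_gt_at_top[of zY]
    proof eventually_elim
      case (elim y)
      have y0: "y > 0" using elim zYpos by simp
      have fp: "f (xF - 1/y) > 0" using fpos[OF gin[OF elim]] .
      have "deriv fY y = fY' y" by (rule DERIV_imp_deriv[OF dfY[OF elim]])
      then show ?case using alg_A3[OF y0 fp, of "F (xF - 1/y)" "deriv f (xF - 1/y)" xF]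
        by (simp add: FY_pos[OF y0] fY_pos[OF y0] fY'_def)
    qed
    with lim show ?thesis using Lim_transform_eventually by fastforce
  qed
  have FYeq: "cdf (distr M borel (\<lambda>\<omega>. 1 / (xF - X \<omega>))) = FY"
    unfolding FY_def DY_def Y_def[abs_def] ..
  have anti: "antimono_on {zY<..} fY"
  proof (rule monotone_onI)
    fix a b assume ab: "a \<in> {zY<..}" "b \<in> {zY<..}" "a \<le> b"
    have a0: "a > 0" "b > 0" using ab zYpos by auto
    have "xF - 1/a \<le> xF - 1/b" using ab a0 by (simp add: frac_le)
    then have f1: "f (xF - 1/b) \<le> f (xF - 1/a)"
      using monotone_onD[OF fanti gin gin] ab by auto
    have f2: "a^2 \<le> b^2" using ab a0 by (simp add: power_mono)
    have "f (xF - 1/b) / b^2 \<le> f (xF - 1/a) / b^2" using f1 a0 by (simp add: divide_right_mono)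
    also have "\<dots> \<le> f (xF - 1/a) / a^2" using f2 a0 fnonneg by (intro divide_left_mono) auto
    finally show "fY b \<le> fY a" using a0 by (simp add: fY_def)
  qed
  have conv: "convex_on {zY<..} fY"
  proof -
    have Ssub: "{zY<..} \<subseteq> {0<..}" using zYpos by auto
    have cinv: "convex_on {zY<..} inverse" by (rule convex_on_inverse[OF Ssub]) simp
    have ainv: "antimono_on {zY<..} (inverse :: real \<Rightarrow> real)"
      by (rule monotone_onI) (use zYpos in \<open>auto intro: le_imp_inverse_le\<close>)
    have cv: "convex_on {zY<..} (\<lambda>y. inverse y * inverse y)"
      by (rule convex_on_mul_anti[OF cinv cinv ainv ainv]) (use zYpos in auto)
    have av: "antimono_on {zY<..} (\<lambda>y. inverse y * inverse y)"
      by (rule monotone_onI) (use zYpos in \<open>auto intro!: mult_mono le_imp_inverse_le\<close>)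
    have cu: "convex_on {zY<..} (\<lambda>y. f (xF - 1/y))"
    proof (rule convex_on_compose_anti[OF fconv fanti])
      show "convex {zY<..}" by simp
      show "xF - 1/y \<in> {z<..<xF}" if "y \<in> {zY<..}" for y using gin that by simp
      fix t :: real and x y assume t: "0 < t" "t < 1" and xy: "x \<in> {zY<..}" "y \<in> {zY<..}"
      have "inverse ((1 - t) *\<^sub>R x + t *\<^sub>R y) \<le> (1 - t) * inverse x + t * inverse y"
        using convex_onD[OF cinv, of t x y] t xy by auto
      then show "(1 - t) * (xF - 1 / x) + t * (xF - 1 / y) \<le> xF - 1 / ((1 - t) * x + t * y)"
        by (simp add: algebra_simps inverse_eq_divide)
    qed
    have au: "antimono_on {zY<..} (\<lambda>y. f (xF - 1/y))"
    proof (rule monotone_onI)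
      fix a b assume ab: "a \<in> {zY<..}" "b \<in> {zY<..}" "a \<le> b"
      have a0: "a > 0" "b > 0" using ab zYpos by auto
      have "xF - 1/a \<le> xF - 1/b" using ab a0 by (simp add: frac_le)
      then show "f (xF - 1/b) \<le> f (xF - 1/a)"
        using monotone_onD[OF fanti gin gin] ab by auto
    qed
    have "convex_on {zY<..} (\<lambda>y. f (xF - 1/y) * (inverse y * inverse y))"
      by (rule convex_on_mul_anti[OF cu cv au av]) (use fnonneg in auto)
    then show ?thesis
      by (rule convex_on_eq_on) (use zYpos in \<open>auto simp: fY_def power2_eq_square divide_inverse\<close>)
  qed
  have mda: "MDA Gumbel FY"
  proof (rule von_mises[of FY zY fY "\<lambda>y. -1 - (1 - FY y) * deriv fY y / (fY y)\<^sup>2"])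
    show "mono FY" by (rule monoI) (simp add: FY_def DY.cdf_nondecreasing)
    show "\<And>y. 0 \<le> FY y" by (simp add: FY_def DY.cdf_nonneg)
    show "\<And>y. zY < y \<Longrightarrow> (FY has_real_derivative fY y) (at y)" by (rule dFY)
    show "\<And>y. zY < y \<Longrightarrow> 0 < fY y" by (rule fYpos)
    show "\<And>y. FY y < 1" by (rule FY_lt)
    show "(FY \<longlongrightarrow> 1) at_top" unfolding FY_def by (rule DY.cdf_lim_at_top_prob)
    show "((\<lambda>y. (1 - FY y) / fY y) has_real_derivative -1 - (1 - FY y) * deriv fY y / (fY y)\<^sup>2) (at y)"
      if y: "zY < y" for y
    proof -
      have d1: "((\<lambda>y. 1 - FY y) has_real_derivative - fY y) (at y)"
        by (auto intro!: derivative_eq_intros dFY[OF y])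
      from DERIV_divide[OF d1 dfY[OF y]]
      have "((\<lambda>y. (1 - FY y) / fY y) has_real_derivative (- fY y * fY y - (1 - FY y) * fY' y) / (fY y * fY y)) (at y)"
        using fYpos[OF y] by simp
      moreover have "deriv fY y = fY' y" by (rule DERIV_imp_deriv[OF dfY[OF y]])
      moreover have "(- fY y * fY y - (1 - FY y) * fY' y) / (fY y * fY y) = -1 - (1 - FY y) * fY' y / (fY y)\<^sup>2"
        using fYpos[OF y] by (simp add: field_simps power2_eq_square)
      ultimately show ?thesis by simp
    qed
    show "((\<lambda>y. -1 - (1 - FY y) * deriv fY y / (fY y)\<^sup>2) \<longlongrightarrow> 0) at_top"
      using tendsto_diff[OF tendsto_const[of "-1"] A3Y] by simp
  qed
  have rend: "right_endpoint FY = \<infinity>"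
  proof -
    have "{y. FY y < 1} = UNIV" using FY_lt by auto
    moreover have "\<forall>x<(\<top>::ereal). \<exists>i\<in>range ereal. x < i"
      using less_PInf_Ex_of_nat by (auto simp: top_ereal_def)
    then have "Sup (range ereal) = (\<top>::ereal)" by (subst Sup_eq_top_iff)
    ultimately show ?thesis unfolding right_endpoint_def by (simp add: top_ereal_def)
  qed
  have fYm[measurable]: "fY \<in> borel_measurable borel" unfolding fY_def[abs_def] by measurable
  have distY: "distributed M lborel (\<lambda>\<omega>. 1 / (xF - X \<omega>)) (\<lambda>y. ennreal (fY y))"
    unfolding distributed_def
  proof (intro conjI)
    show "(\<lambda>\<omega>. 1 / (xF - X \<omega>)) \<in> measurable M lborel" by simp
    show "(\<lambda>y. ennreal (fY y)) \<in> borel_measurable lborel" by simp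
    define \<phi> where "\<phi> x = 1 / (xF - x)" for x :: real
    have phim[measurable]: "\<phi> \<in> borel_measurable borel" unfolding \<phi>_def[abs_def] by measurable
    have "distr M lborel (\<lambda>\<omega>. 1 / (xF - X \<omega>)) = distr (distr M lborel X) lborel \<phi>"
      by (subst distr_distr) (auto simp: \<phi>_def comp_def)
    also have "distr M lborel X = density lborel (\<lambda>x. ennreal (f x))"
      by (rule distributed_distr_eq_density[OF dens])
    finally have eq1: "distr M lborel (\<lambda>\<omega>. 1 / (xF - X \<omega>)) = distr (density lborel (\<lambda>x. ennreal (f x))) lborel \<phi>" .
    have "distr (density lborel (\<lambda>x. ennreal (f x))) lborel \<phi> = density lborel (\<lambda>y. ennreal (fY y))"
    proof (rule measure_eqI)
      show "sets (distr (density lborel (\<lambda>x. ennreal (f x))) lborel \<phi>) = sets (density lborel (\<lambda>y. ennreal (fY y)))"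
        by simp
      fix A assume "A \<in> sets (distr (density lborel (\<lambda>x. ennreal (f x))) lborel \<phi>)"
      then have A[measurable]: "A \<in> sets borel" by simp
      define h1 where "h1 x = ennreal (f x) * indicator A (\<phi> x)" for x
      define h2 where "h2 y = ennreal (fY y) * indicator A y" for y
      have h1m[measurable]: "h1 \<in> borel_measurable borel" unfolding h1_def[abs_def] by measurable
      have h2m[measurable]: "h2 \<in> borel_measurable borel" unfolding h2_def[abs_def] by measurable
      define \<nu>1 where "\<nu>1 = density lborel h1"
      define \<nu>2 where "\<nu>2 = density lborel h2"
      have e1: "emeasure \<nu>1 S = (\<integral>\<^sup>+x. h1 x * indicator S x \<partial>lborel)" if "S \<in> sets borel" for S
        unfolding \<nu>1_def using that by (subst emeasure_density) auto
      have e2: "emeasure \<nu>2 S = (\<integral>\<^sup>+x. h2 x * indicator S x \<partial>lborel)" if "S \<in> sets borel" for S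
        unfolding \<nu>2_def using that by (subst emeasure_density) auto
      have L: "emeasure (distr (density lborel (\<lambda>x. ennreal (f x))) lborel \<phi>) A = emeasure \<nu>1 UNIV"
      proof -
        have "emeasure (distr (density lborel (\<lambda>x. ennreal (f x))) lborel \<phi>) A
            = emeasure (density lborel (\<lambda>x. ennreal (f x))) (\<phi> -` A \<inter> space (density lborel (\<lambda>x. ennreal (f x))))"
          by (rule emeasure_distr) auto
        also have "\<dots> = (\<integral>\<^sup>+x. ennreal (f x) * indicator (\<phi> -` A) x \<partial>lborel)"
          using measurable_sets[OF phim A] by (subst emeasure_density) auto
        also have "\<dots> = emeasure \<nu>1 UNIV" by (subst e1) (auto simp: h1_def indicator_def)
        finally show ?thesis .
      qed
      have R: "emeasure (density lborel (\<lambda>y. ennreal (fY y))) A = emeasure \<nu>2 UNIV"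
        by (subst emeasure_density, simp, simp, subst e2) (auto simp: h2_def)
      show "emeasure (distr (density lborel (\<lambda>x. ennreal (f x))) lborel \<phi>) A = emeasure (density lborel (\<lambda>y. ennreal (fY y))) A"
        unfolding L R
      proof -
        define a where "a n = 1 / (real n + 2)" for n :: nat
        define b where "b n = real n + 2" for n :: nat
        have ab: "0 < a n" "a n < b n" for n
        proof -
          show "0 < a n" by (simp add: a_def)
          have "a n \<le> 1/2" by (simp add: a_def frac_le)
          then show "a n < b n" by (simp add: b_def)
        qed
        define I where "I n = {xF - 1 / a n .. xF - 1 / b n}" for n
        define J where "J n = {a n .. b n}" for n
        have piece: "emeasure \<nu>1 (I n) = emeasure \<nu>2 (J n)" for n
          unfolding e1[of "I n", simplified I_def, OF atLeastAtMost_borel] e2[of "J n", simplified J_def, OF atLeastAtMost_borel]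
            h1_def h2_def \<phi>_def I_def J_def
        proof -
          have "(\<integral>\<^sup>+y. ennreal (fY y) * indicator A y * indicator {a n..b n} y \<partial>lborel)
              = (\<integral>\<^sup>+y. ennreal (f (xF - 1/y) / y^2) * indicator A y * indicator {a n..b n} y \<partial>lborel)"
            by (rule nn_integral_cong) (use ab[of n] in \<open>auto simp: fY_def indicator_def\<close>)
          then show "(\<integral>\<^sup>+x. ennreal (f x) * indicator A (1 / (xF - x)) * indicator {xF - 1 / a n..xF - 1 / b n} x \<partial>lborel)
              = (\<integral>\<^sup>+y. ennreal (fY y) * indicator A y * indicator {a n..b n} y \<partial>lborel)"
            using subst_piece[OF fm A fnonneg ab(1)[of n] ab(2)[of n], of xF] by simp
        qed
        have incI: "incseq I" and incJ: "incseq J"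
        proof -
          have am: "a n \<le> a m" "b m \<le> b n" if "m \<le> n" for m n
            using that by (auto simp: a_def b_def frac_le)
          have bm: "1 / b n \<le> 1 / b m" "1 / a m \<le> 1 / a n" if "m \<le> n" for m n
            using that ab am by (auto intro!: frac_le simp: a_def b_def)
          show "incseq I" unfolding incseq_def I_def using bm by auto
          show "incseq J" unfolding incseq_def J_def using am by auto
        qed
        have UI: "(\<Union>n. I n) = {..<xF}"
        proof (intro equalityI subsetI)
          fix x assume "x \<in> (\<Union>n. I n)"
          then obtain n where "x \<le> xF - 1 / b n" by (auto simp: I_def)
          moreover have "1 / b n > 0" by (simp add: b_def)
          ultimately have "x < xF" by linarith
          then show "x \<in> {..<xF}" by simp
        next
          fix x assume "x \<in> {..<xF}"
          then have d: "xF - x > 0" by simp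
          obtain n :: nat where n: "real n > max (xF - x) (1 / (xF - x))" using reals_Archimedean2 by blast
          have "1 / a n = real n + 2" by (simp add: a_def)
          then have 1: "xF - 1 / a n \<le> x" using n by simp
          have "1 / b n < 1 / (1 / (xF - x))" using n d by (intro frac_less2) (auto simp: b_def)
          then have 2: "x \<le> xF - 1 / b n" using d by simp
          show "x \<in> (\<Union>n. I n)" using 1 2 by (auto simp: I_def)
        qed
        have UJ: "(\<Union>n. J n) = {0<..}"
        proof (intro equalityI subsetI)
          fix y assume "y \<in> (\<Union>n. J n)"
          then obtain n where "a n \<le> y" by (auto simp: J_def)
          then show "y \<in> {0<..}" using ab(1)[of n] by simp
        next
          fix y :: real assume "y \<in> {0<..}"
          then have d: "y > 0" by simp
          obtain n :: nat where n: "real n > max y (1 / y)" using reals_Archimedean2 by blast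
          have "a n < 1 / (1 / y)" unfolding a_def using n d by (intro frac_less2) auto
          then have 1: "a n \<le> y" using d by simp
          have 2: "y \<le> b n" using n by (simp add: b_def)
          show "y \<in> (\<Union>n. J n)" using 1 2 by (auto simp: J_def)
        qed
        have sI: "range I \<subseteq> sets \<nu>1" by (auto simp: \<nu>1_def I_def)
        have sJ: "range J \<subseteq> sets \<nu>2" by (auto simp: \<nu>2_def J_def)
        have n1: "emeasure \<nu>1 {..<xF} = emeasure \<nu>1 UNIV"
        proof -
          have "emeasure \<nu>1 {xF..} \<le> emeasure D {xF..}"
          proof -
            have "emeasure \<nu>1 {xF..} = (\<integral>\<^sup>+x. h1 x * indicator {xF..} x \<partial>lborel)" by (rule e1) simp
            also have "\<dots> \<le> (\<integral>\<^sup>+x. ennreal (f x) * indicator {xF..} x \<partial>lborel)"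
              by (intro nn_integral_mono) (auto simp: h1_def indicator_def)
            also have "\<dots> = emeasure D {xF..}" unfolding Ddens by (subst emeasure_density) auto
            finally show ?thesis .
          qed
          also have "emeasure D {xF..} = 0" using gexF by (simp add: D.emeasure_eq_measure)
          finally have z1: "emeasure \<nu>1 {xF..} = 0" by simp
          have "emeasure \<nu>1 {..<xF} + emeasure \<nu>1 {xF..} = emeasure \<nu>1 ({..<xF} \<union> {xF..})"
            by (rule plus_emeasure) (auto simp: \<nu>1_def)
          moreover have "{..<xF} \<union> {xF..} = (UNIV :: real set)" by auto
          ultimately show ?thesis using z1 by simp
        qed
        have n2: "emeasure \<nu>2 {0<..} = emeasure \<nu>2 UNIV"
        proof -
          have "emeasure \<nu>2 {..0} = (\<integral>\<^sup>+x. h2 x * indicator {..0} x \<partial>lborel)" by (rule e2) simp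
          also have "(\<lambda>x. h2 x * indicator {..0} x) = (\<lambda>x. 0)"
            by (auto simp: fun_eq_iff h2_def indicator_def fY_def)
          finally have z2: "emeasure \<nu>2 {..0} = 0" by simp
          have "emeasure \<nu>2 {0<..} + emeasure \<nu>2 {..0} = emeasure \<nu>2 ({0<..} \<union> {..0})"
            by (rule plus_emeasure) (auto simp: \<nu>2_def)
          moreover have "{0<..} \<union> {..0} = (UNIV :: real set)" by auto
          ultimately show ?thesis using z2 by simp
        qed
        have "emeasure \<nu>1 UNIV = (SUP n. emeasure \<nu>1 (I n))"
          using SUP_emeasure_incseq[OF sI incI] UI n1 by simp
        also have "\<dots> = (SUP n. emeasure \<nu>2 (J n))" using piece by simp
        also have "\<dots> = emeasure \<nu>2 UNIV"
          using SUP_emeasure_incseq[OF sJ incJ] UJ n2 by simp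
        finally show "emeasure \<nu>1 UNIV = emeasure \<nu>2 UNIV" .
      qed
    qed
    with eq1 show "distr M lborel (\<lambda>\<omega>. 1 / (xF - X \<omega>)) = density lborel (\<lambda>y. ennreal (fY y))" by simp
  qed
  show ?thesis unfolding FYeq
    using distY fYnn dFY dfY fYpos anti conv mda rend A3Y
    by (intro exI[of _ fY] exI[of _ zY]) (auto simp: real_differentiable_def)
qed


end
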